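(* Let $\Gamma_1$ and $\Gamma_2$ be $R$-thin digraphs with no loops, and let $b_1,b_2$ be positive integers such that $\Gamma_1[\overline{\mathrm{K}}_{b_1}]\cong\Gamma_2[\overline{\mathrm{K}}_{b_2}]$. Then $\Gamma_1\cong\Gamma_2$ and $b_1=b_2$.
   Context: A digraph is a pair $(V,A)$ with $A\subseteq V\times V$; a loop is an arc $(v,v)$. For $v\in V$, $\Gamma^+(v)=\{w:(v,w)\in A\}$ and $\Gamma^-(v)=\{u:(u,v)\in A\}$. $\Gamma$ is $R$-thick if there are distinct vertices $u,v$ with $\Gamma^+(u)=\Gamma^+(v)$ and $\Gamma^-(u)=\Gamma^-(v)$, and $R$-thin otherwise. $\overline{\mathrm{K}}_b$ has $b$ vertices and no arcs. Lexicographic product $\Gamma[\Delta]$: vertex set $V(\Gamma)\times V(\Delta)$, $(u_1,u_2)\to(v_1,v_2)$ iff $u_1\to v_1$ in $\Gamma$, or $u_1=v_1$ and $u_2\to v_2$ in $\Delta$. *)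

theory Defs
  imports Main
begin

type_synonym 'a digraph = "'a set \<times> ('a \<times> 'a) set"

definition verts :: "'a digraph \<Rightarrow> 'a set" where "verts G = fst G"
definition arcs :: "'a digraph \<Rightarrow> ('a \<times> 'a) set" where "arcs G = snd G"

definition digraph :: "'a digraph \<Rightarrow> bool" where
  "digraph G \<longleftrightarrow> arcs G \<subseteq> verts G \<times> verts G"

definition loopless :: "'a digraph \<Rightarrow> bool" where
  "loopless G \<longleftrightarrow> (\<forall>v. (v, v) \<notin> arcs G)"

definition out_nbhd :: "'a digraph \<Rightarrow> 'a \<Rightarrow> 'a set" where
  "out_nbhd G v = {w. (v, w) \<in> arcs G}"

definition in_nbhd :: "'a digraph \<Rightarrow> 'a \<Rightarrow> 'a set" where
  "in_nbhd G v = {u. (u, v) \<in> arcs G}"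

definition R_thick :: "'a digraph \<Rightarrow> bool" where
  "R_thick G \<longleftrightarrow> (\<exists>u\<in>verts G. \<exists>v\<in>verts G. u \<noteq> v \<and>
      out_nbhd G u = out_nbhd G v \<and> in_nbhd G u = in_nbhd G v)"

definition R_thin :: "'a digraph \<Rightarrow> bool" where
  "R_thin G \<longleftrightarrow> \<not> R_thick G"

definition empty_digraph :: "nat \<Rightarrow> nat digraph" where
  "empty_digraph b = ({0..<b}, {})"

definition lex_product :: "'a digraph \<Rightarrow> 'b digraph \<Rightarrow> ('a \<times> 'b) digraph" where
  "lex_product G D = (verts G \<times> verts D,
     {((u1, u2), (v1, v2)). (u1, u2) \<in> verts G \<times> verts D \<and> (v1, v2) \<in> verts G \<times> verts D \<and>
        ((u1, v1) \<in> arcs G \<or> (u1 = v1 \<and> (u2, v2) \<in> arcs D))})"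

definition digraph_iso :: "'a digraph \<Rightarrow> 'b digraph \<Rightarrow> bool" where
  "digraph_iso G H \<longleftrightarrow> (\<exists>f. bij_betw f (verts G) (verts H) \<and>
     (\<forall>u\<in>verts G. \<forall>v\<in>verts G. (u, v) \<in> arcs G \<longleftrightarrow> (f u, f v) \<in> arcs H))"

end

theory Submission
  imports Defs
begin

definition twin :: "'a digraph \<Rightarrow> 'a \<Rightarrow> 'a \<Rightarrow> bool" where
  "twin H x y \<longleftrightarrow> (\<forall>z\<in>verts H. ((x,z)\<in>arcs H \<longleftrightarrow> (y,z)\<in>arcs H) \<and> ((z,x)\<in>arcs H \<longleftrightarrow> (z,y)\<in>arcs H))"

lemma iso_twin:
  assumes "bij_betw f (verts H1) (verts H2)"
    and "\<forall>u\<in>verts H1. \<forall>v\<in>verts H1. (u, v) \<in> arcs H1 \<longleftrightarrow> (f u, f v) \<in> arcs H2"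
    and "x \<in> verts H1" "y \<in> verts H1"
  shows "twin H2 (f x) (f y) \<longleftrightarrow> twin H1 x y"
proof -
  have im: "verts H2 = f ` verts H1" using assms(1) by (simp add: bij_betw_def)
  show ?thesis unfolding twin_def im using assms(2-4) by auto
qed

lemma lex_verts: "verts (lex_product G (empty_digraph b)) = verts G \<times> {0..<b}"
  by (simp add: lex_product_def verts_def empty_digraph_def)

lemma lex_arc:
  assumes "u \<in> verts G" "v \<in> verts G" "i < b" "j < b"
  shows "((u,i),(v,j)) \<in> arcs (lex_product G (empty_digraph b)) \<longleftrightarrow> (u,v) \<in> arcs G"
  using assms by (simp add: lex_product_def verts_def arcs_def empty_digraph_def)

lemma lex_arcs_sub: "arcs (lex_product G (empty_digraph b)) \<subseteq> verts (lex_product G (empty_digraph b)) \<times> verts (lex_product G (empty_digraph b))"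
  by (auto simp add: lex_product_def verts_def arcs_def empty_digraph_def)

lemma lex_twin:
  assumes "digraph G" "R_thin G" "b > 0"
    and "u \<in> verts G" "v \<in> verts G" "i < b" "j < b"
  shows "twin (lex_product G (empty_digraph b)) (u,i) (v,j) \<longleftrightarrow> u = v"
proof
  assume "u = v" thus "twin (lex_product G (empty_digraph b)) (u,i) (v,j)"
    unfolding twin_def lex_verts using assms lex_arc by (metis SigmaE atLeastLessThan_iff)
next
  assume t: "twin (lex_product G (empty_digraph b)) (u,i) (v,j)"
  have "\<forall>w\<in>verts G. ((u,w)\<in>arcs G \<longleftrightarrow> (v,w)\<in>arcs G) \<and> ((w,u)\<in>arcs G \<longleftrightarrow> (w,v)\<in>arcs G)"
  proof
    fix w assume w: "w \<in> verts G"
    hence "(w,0) \<in> verts (lex_product G (empty_digraph b))" using assms by (simp add: lex_verts)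
    with t have "(((u,i),(w,0))\<in>arcs (lex_product G (empty_digraph b)) \<longleftrightarrow> ((v,j),(w,0))\<in>arcs (lex_product G (empty_digraph b)))
      \<and> (((w,0),(u,i))\<in>arcs (lex_product G (empty_digraph b)) \<longleftrightarrow> ((w,0),(v,j))\<in>arcs (lex_product G (empty_digraph b)))"
      unfolding twin_def by blast
    thus "((u,w)\<in>arcs G \<longleftrightarrow> (v,w)\<in>arcs G) \<and> ((w,u)\<in>arcs G \<longleftrightarrow> (w,v)\<in>arcs G)"
      using lex_arc[of _ G _ _ b] assms w by auto
  qed
  hence "out_nbhd G u = out_nbhd G v" "in_nbhd G u = in_nbhd G v"
    using assms(1) unfolding digraph_def out_nbhd_def in_nbhd_def by blast+
  thus "u = v" using assms unfolding R_thin_def R_thick_def by blast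
qed

theorem lemma5p3:
  fixes G1 :: "'a digraph" and G2 :: "'b digraph" and b1 b2 :: nat
  assumes "digraph G1" and "digraph G2"
    and "R_thin G1" and "R_thin G2"
    and "loopless G1" and "loopless G2"
    and "verts G1 \<noteq> {}" and "verts G2 \<noteq> {}"
    and "b1 > 0" and "b2 > 0"
    and "digraph_iso (lex_product G1 (empty_digraph b1)) (lex_product G2 (empty_digraph b2))"
  shows "digraph_iso G1 G2 \<and> b1 = b2"
proof -
  let ?P1 = "lex_product G1 (empty_digraph b1)"
  let ?P2 = "lex_product G2 (empty_digraph b2)"
  obtain f where bij: "bij_betw f (verts ?P1) (verts ?P2)"
    and hom: "\<forall>u\<in>verts ?P1. \<forall>v\<in>verts ?P1. (u, v) \<in> arcs ?P1 \<longleftrightarrow> (f u, f v) \<in> arcs ?P2"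
    using assms(11) unfolding digraph_iso_def by blast
  have fin: "f x \<in> verts G2 \<times> {0..<b2}" if "x \<in> verts G1 \<times> {0..<b1}" for x
    using bij that lex_verts by (metis bij_betwE)
  have tw: "twin ?P2 (f x) (f y) \<longleftrightarrow> twin ?P1 x y" if "x \<in> verts G1 \<times> {0..<b1}" "y \<in> verts G1 \<times> {0..<b1}" for x y
    using iso_twin[OF bij hom] that lex_verts by metis
  define g where "g u = fst (f (u,0))" for u
  have fu0: "f (u,0) = (g u, snd (f (u,0)))" for u by (simp add: g_def)
  have gin: "g u \<in> verts G2" if "u \<in> verts G1" for u
    using fin[of "(u,0)"] that assms(9) g_def by auto
  have inj: "inj_on g (verts G1)"
  proof (rule inj_onI)
    fix u v assume uv: "u \<in> verts G1" "v \<in> verts G1" "g u = g v"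
    have "snd (f (u,0)) < b2" "snd (f (v,0)) < b2" using fin[of "(u,0)"] fin[of "(v,0)"] uv assms(9) by auto
    hence "twin ?P2 (g u, snd (f (u,0))) (g v, snd (f (v,0)))"
      using uv gin lex_twin[OF assms(2,4,10)] by simp
    hence "twin ?P2 (f (u,0)) (f (v,0))" using fu0[of u] fu0[of v] by metis
    hence "twin ?P1 (u,0) (v,0)" using tw uv assms(9) by auto
    thus "u = v" using lex_twin[OF assms(1,3,9)] uv assms(9) by auto
  qed
  have surj: "g ` verts G1 = verts G2"
  proof
    show "g ` verts G1 \<subseteq> verts G2" using gin by auto
    show "verts G2 \<subseteq> g ` verts G1"
    proof
      fix w assume w: "w \<in> verts G2"
      hence "(w,0) \<in> verts ?P2" using assms(10) by (simp add: lex_verts)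
      then obtain x where x: "x \<in> verts ?P1" "f x = (w,0)" using bij
        by (metis bij_betw_iff_bijections)
      obtain u i where ui: "x = (u,i)" "u \<in> verts G1" "i < b1" using x lex_verts by (metis SigmaE atLeastLessThan_iff)
      have "twin ?P1 (u,i) (u,0)" using lex_twin[OF assms(1,3,9)] ui assms(9) by auto
      hence "twin ?P2 (f (u,i)) (f (u,0))" using tw[of "(u,i)" "(u,0)"] ui assms(9) by auto
      hence "twin ?P2 (w,0) (f (u,0))" using ui x by simp
      moreover have "snd (f (u,0)) < b2" using fin[of "(u,0)"] ui assms(9) by auto
      ultimately have "twin ?P2 (w,0) (g u, snd (f (u,0)))" using fu0[of u] by metis
      hence "w = g u" using lex_twin[OF assms(2,4,10)] w gin ui \<open>snd (f (u,0)) < b2\<close> assms(10) by simp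
      thus "w \<in> g ` verts G1" using ui by auto
    qed
  qed
  have arcs: "(u, v) \<in> arcs G1 \<longleftrightarrow> (g u, g v) \<in> arcs G2" if "u \<in> verts G1" "v \<in> verts G1" for u v
  proof -
    have "(u, v) \<in> arcs G1 \<longleftrightarrow> ((u,0),(v,0)) \<in> arcs ?P1" using lex_arc that assms(9) by metis
    also have "\<dots> \<longleftrightarrow> (f (u,0), f (v,0)) \<in> arcs ?P2" using hom that assms(9) by (auto simp: lex_verts)
    also have "\<dots> \<longleftrightarrow> ((g u, snd (f (u,0))), (g v, snd (f (v,0)))) \<in> arcs ?P2"
      using fu0[of u] fu0[of v] by metis
    also have "\<dots> \<longleftrightarrow> (g u, g v) \<in> arcs G2"
    proof -
      have "snd (f (u,0)) < b2" "snd (f (v,0)) < b2" using fin[of "(u,0)"] fin[of "(v,0)"] that assms(9) by auto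
      thus ?thesis using lex_arc[of "g u" G2 "g v" "snd (f (u,0))" b2 "snd (f (v,0))"] gin that by blast
    qed
    finally show ?thesis .
  qed
  have iso: "digraph_iso G1 G2" unfolding digraph_iso_def bij_betw_def using inj surj arcs by blast
  obtain u where u: "u \<in> verts G1" using assms(7) by blast
  define C1 where "C1 = {y \<in> verts ?P1. twin ?P1 (u,0) y}"
  have C1: "C1 = {u} \<times> {0..<b1}" unfolding C1_def lex_verts
    using lex_twin[OF assms(1,3,9)] u assms(9) by auto
  have "f ` C1 = {y \<in> verts ?P2. twin ?P2 (f (u,0)) y}"
  proof
    show "f ` C1 \<subseteq> {y \<in> verts ?P2. twin ?P2 (f (u,0)) y}"
    proof
      fix y assume "y \<in> f ` C1"
      then obtain i where i: "i < b1" "y = f (u,i)" using C1 by auto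
      have "f (u,i) \<in> verts ?P2" using fin[of "(u,i)"] u i by (simp add: lex_verts)
      moreover have "twin ?P1 (u,0) (u,i)" using lex_twin[OF assms(1,3,9)] u i assms(9) by auto
      hence "twin ?P2 (f (u,0)) (f (u,i))" using tw[of "(u,0)" "(u,i)"] u i assms(9) by auto
      ultimately show "y \<in> {y \<in> verts ?P2. twin ?P2 (f (u,0)) y}" using i by simp
    qed
    show "{y \<in> verts ?P2. twin ?P2 (f (u,0)) y} \<subseteq> f ` C1"
    proof
      fix y assume y: "y \<in> {y \<in> verts ?P2. twin ?P2 (f (u,0)) y}"
      then obtain x where x: "x \<in> verts ?P1" "f x = y" using bij
        by (metis (no_types, lifting) bij_betw_iff_bijections mem_Collect_eq)
      have "twin ?P2 (f (u,0)) (f x)" using x y by simp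
      moreover have "(u,0) \<in> verts G1 \<times> {0..<b1}" "x \<in> verts G1 \<times> {0..<b1}" using x u assms(9) by (auto simp: lex_verts)
      ultimately have "twin ?P1 (u,0) x" using tw by blast
      thus "y \<in> f ` C1" using x C1_def by auto
    qed
  qed
  also have "\<dots> = {g u} \<times> {0..<b2}"
  proof -
    have s: "snd (f (u,0)) < b2" using fin[of "(u,0)"] u assms(9) by auto
    have "twin ?P2 (f (u,0)) (w,j) \<longleftrightarrow> w = g u" if "w \<in> verts G2" "j < b2" for w j
      using lex_twin[OF assms(2,4,10), of "g u" w "snd (f (u,0))" j] fu0[of u] gin[OF u] s that by (metis (no_types))
    hence "\<And>w j. (w, j) \<in> {y \<in> verts ?P2. twin ?P2 (f (u,0)) y} \<longleftrightarrow> (w, j) \<in> {g u} \<times> {0..<b2}"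
      using gin[OF u] by (auto simp: lex_verts)
    thus ?thesis by (intro set_eqI) (metis surj_pair)

  qed
  finally have "f ` C1 = {g u} \<times> {0..<b2}" .
  moreover have "C1 \<subseteq> verts ?P1" unfolding C1_def by blast
  hence "inj_on f C1" using bij_betw_imp_inj_on[OF bij] inj_on_subset by blast
  ultimately have "card ({g u} \<times> {0..<b2}) = card C1" using card_image[of f C1] by simp
  hence "b1 = b2" using C1 by (simp add: card_cartesian_product)
  with iso show ?thesis by blast
qed

end
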